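(* Let $X$ be an ultrahomogeneous linear order, let $\Gamma$ be the group of all automorphisms of $X$ acting by application, and let $I$ be the ideal of nowhere dense subsets of $X$ (in the order topology). Then $\Gamma\curvearrowright X, I$ is a simple dynamical ideal.
   Context: A linear order is ultrahomogeneous if every order-isomorphism between finite subsets extends to an automorphism. For a group $\Gamma$ acting on $X$ and $a\subseteq X$, $\mathrm{pstab}(a)=\{\gamma\in\Gamma:\gamma\cdot x=x\ \forall x\in a\}$. A dynamical ideal $\Gamma\curvearrowright X, I$ (a $\Gamma$-invariant ideal containing all singletons) is simple if for all $a\subseteq b$ in $I$, the only normal subgroup of $\mathrm{pstab}(a)$ containing $\mathrm{pstab}(b)$ is $\mathrm{pstab}(a)$ itself. *)

theory Defs
  imports "HOL-Analysis.Analysis" "HOL-Algebra.Group_Action"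
begin

definition nowhere_dense :: "'a::topological_space set \<Rightarrow> bool" where
  "nowhere_dense A \<longleftrightarrow> interior (closure A) = {}"

definition order_aut_group :: "('a::linorder \<Rightarrow> 'a) monoid" where
  "order_aut_group = \<lparr>carrier = {f. bij f \<and> strict_mono f}, mult = (\<circ>), one = id\<rparr>"

definition ultrahomogeneous :: "'a::linorder itself \<Rightarrow> bool" where
  "ultrahomogeneous (TYPE('a)) \<longleftrightarrow>
     (\<forall>(A::'a set) (h::'a \<Rightarrow> 'a). finite A \<and> strict_mono_on A h \<longrightarrow>
        (\<exists>f \<in> carrier (order_aut_group :: ('a \<Rightarrow> 'a) monoid). \<forall>x\<in>A. f x = h x))"

definition set_ideal :: "'x set \<Rightarrow> 'x set set \<Rightarrow> bool" where
  "set_ideal X I \<longleftrightarrow> I \<subseteq> Pow X \<and> {} \<in> I \<and>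
     (\<forall>A B. A \<in> I \<and> B \<subseteq> A \<longrightarrow> B \<in> I) \<and>
     (\<forall>A B. A \<in> I \<and> B \<in> I \<longrightarrow> A \<union> B \<in> I)"

definition dynamical_ideal ::
  "('g, 'b) monoid_scheme \<Rightarrow> 'x set \<Rightarrow> ('g \<Rightarrow> 'x \<Rightarrow> 'x) \<Rightarrow> 'x set set \<Rightarrow> bool" where
  "dynamical_ideal G X act I \<longleftrightarrow>
     group_action G X act \<and> set_ideal X I \<and>
     (\<forall>g \<in> carrier G. \<forall>A \<in> I. act g ` A \<in> I) \<and>
     (\<forall>x \<in> X. {x} \<in> I)"

definition pstab :: "('g, 'b) monoid_scheme \<Rightarrow> ('g \<Rightarrow> 'x \<Rightarrow> 'x) \<Rightarrow> 'x set \<Rightarrow> 'g set" where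
  "pstab G act a = {g \<in> carrier G. \<forall>x \<in> a. act g x = x}"

definition simple_dynamical_ideal ::
  "('g, 'b) monoid_scheme \<Rightarrow> 'x set \<Rightarrow> ('g \<Rightarrow> 'x \<Rightarrow> 'x) \<Rightarrow> 'x set set \<Rightarrow> bool" where
  "simple_dynamical_ideal G X act I \<longleftrightarrow>
     dynamical_ideal G X act I \<and>
     (\<forall>a b. a \<in> I \<and> b \<in> I \<and> a \<subseteq> b \<longrightarrow>
        (\<forall>N. normal N (G\<lparr>carrier := pstab G act a\<rparr>) \<and> pstab G act b \<subseteq> N
             \<longrightarrow> N = pstab G act a))"

end

theory Submission
  imports Defs
begin


definition autS :: "('a::linorder \<Rightarrow> 'a) set" where
  "autS = {f. bij f \<and> strict_mono f}"

abbreviation iv :: "('a \<Rightarrow> 'b) \<Rightarrow> 'b \<Rightarrow> 'a" where "iv f \<equiv> inv_into UNIV f"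

lemma carrier_oag[simp]: "carrier (order_aut_group::('a::linorder \<Rightarrow> 'a) monoid) = autS"
  by (simp add: order_aut_group_def autS_def)
lemma mult_oag[simp]: "mult (order_aut_group::('a::linorder \<Rightarrow> 'a) monoid) f g = f \<circ> g"
  by (simp add: order_aut_group_def)
lemma one_oag[simp]: "one (order_aut_group::('a::linorder \<Rightarrow> 'a) monoid) = id"
  by (simp add: order_aut_group_def)

lemma autS_inv: "f \<in> autS \<Longrightarrow> iv f \<in> autS"
proof -
  assume f: "f \<in> autS"
  hence b: "bij f" and s: "strict_mono f" by (auto simp: autS_def)
  have "strict_mono (iv f)"
  proof (rule strict_monoI)
    fix x y :: 'a assume "x < y"
    then show "iv f x < iv f y"
      using s b by (metis bij_inv_eq_iff strict_mono_less)
  qed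
  then show ?thesis using b by (simp add: autS_def bij_imp_bij_inv)
qed

lemma autS_comp: "f \<in> autS \<Longrightarrow> g \<in> autS \<Longrightarrow> f \<circ> g \<in> autS"
  by (auto simp: autS_def bij_comp strict_mono_def)

lemma autS_id: "id \<in> autS"
  by (auto simp: autS_def strict_mono_def)

lemma autS_less[simp]: "f \<in> autS \<Longrightarrow> f x < f y \<longleftrightarrow> x < y"
  by (simp add: autS_def strict_mono_less)
lemma autS_le[simp]: "f \<in> autS \<Longrightarrow> f x \<le> f y \<longleftrightarrow> x \<le> y"
  by (simp add: autS_def strict_mono_less_eq)
lemma autS_eq[simp]: "f \<in> autS \<Longrightarrow> f x = f y \<longleftrightarrow> x = y"
  by (simp add: autS_def strict_mono_eq)
lemma autS_inv_f[simp]: "f \<in> autS \<Longrightarrow> iv f (f x) = x"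
  by (simp add: autS_def bij_is_inj)
lemma autS_f_inv[simp]: "f \<in> autS \<Longrightarrow> f (iv f x) = x"
  by (simp add: autS_def bij_is_surj surj_f_inv_f)

lemma group_oag: "group (order_aut_group :: ('a::linorder \<Rightarrow> 'a) monoid)"
proof (rule groupI)
  fix x y :: "'a \<Rightarrow> 'a"
  assume "x \<in> carrier order_aut_group" "y \<in> carrier order_aut_group"
  then show "x \<otimes>\<^bsub>order_aut_group\<^esub> y \<in> carrier order_aut_group" by (simp add: autS_comp)
next
  show "\<one>\<^bsub>order_aut_group\<^esub> \<in> carrier (order_aut_group:: ('a::linorder \<Rightarrow> 'a) monoid)"
    by (simp add: autS_id)
next
  fix x y z :: "'a \<Rightarrow> 'a"
  show "x \<otimes>\<^bsub>order_aut_group\<^esub> y \<otimes>\<^bsub>order_aut_group\<^esub> z =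
        x \<otimes>\<^bsub>order_aut_group\<^esub> (y \<otimes>\<^bsub>order_aut_group\<^esub> z)" by (simp add: comp_assoc)
next
  fix x :: "'a \<Rightarrow> 'a"
  show "\<one>\<^bsub>order_aut_group\<^esub> \<otimes>\<^bsub>order_aut_group\<^esub> x = x" by simp
next
  fix x :: "'a \<Rightarrow> 'a"
  assume x: "x \<in> carrier order_aut_group"
  show "\<exists>y\<in>carrier order_aut_group. y \<otimes>\<^bsub>order_aut_group\<^esub> x = \<one>\<^bsub>order_aut_group\<^esub>"
    using x by (intro bexI[of _ "iv x"]) (auto simp: autS_inv fun_eq_iff)
qed

lemma inv_oag[simp]: "f \<in> autS \<Longrightarrow> m_inv (order_aut_group::('a::linorder \<Rightarrow> 'a) monoid) f = iv f"
  by (rule group.inv_equality[OF group_oag]) (auto simp: autS_inv fun_eq_iff)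

lemma group_action_oag:
  "group_action (order_aut_group :: ('a::linorder \<Rightarrow> 'a) monoid) UNIV (\<lambda>f x. f x)"
  unfolding group_action_def group_hom_def group_hom_axioms_def
proof (intro conjI)
  show "group (order_aut_group :: ('a::linorder \<Rightarrow> 'a) monoid)" by (rule group_oag)
  show "group (BijGroup (UNIV::'a set))" by (rule group_BijGroup)
  show "(\<lambda>f x. f x) \<in> hom order_aut_group (BijGroup (UNIV::'a set))"
    unfolding hom_def
  proof (safe)
    fix f :: "'a \<Rightarrow> 'a" assume "f \<in> carrier order_aut_group"
    then show "(\<lambda>x. f x) \<in> carrier (BijGroup UNIV)"
      by (auto simp: BijGroup_def Bij_def autS_def)
  next
    fix f g :: "'a \<Rightarrow> 'a" assume "f \<in> carrier order_aut_group" "g \<in> carrier order_aut_group"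
    then show "(\<lambda>x. (f \<otimes>\<^bsub>order_aut_group\<^esub> g) x) = (\<lambda>x. f x) \<otimes>\<^bsub>BijGroup UNIV\<^esub> (\<lambda>x. g x)"
      by (auto simp: BijGroup_def Bij_def autS_def compose_def fun_eq_iff)
  qed
qed



lemma uh_ext:
  assumes "ultrahomogeneous TYPE('a::linorder)" "finite A" "strict_mono_on A h"
  shows "\<exists>f\<in>autS. \<forall>x\<in>A. f x = (h x :: 'a)"
  using assms by (auto simp: ultrahomogeneous_def)

lemma uh1:
  assumes "ultrahomogeneous TYPE('a::linorder)"
  shows "\<exists>f\<in>autS. f x1 = (y1::'a)"
proof -
  have "\<exists>f\<in>autS. \<forall>x\<in>{x1}. f x = (\<lambda>_. y1) x"
    by (rule uh_ext[OF assms]) (auto simp: strict_mono_on_def)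
  then show ?thesis by auto
qed

lemma uh2:
  assumes "ultrahomogeneous TYPE('a::linorder)" "x1 < x2" "y1 < (y2::'a)"
  shows "\<exists>f\<in>autS. f x1 = y1 \<and> f x2 = y2"
proof -
  have "\<exists>f\<in>autS. \<forall>x\<in>{x1,x2}. f x = (\<lambda>z. if z = x1 then y1 else y2) x"
    by (rule uh_ext[OF assms(1)]) (use assms in \<open>auto simp: strict_mono_on_def\<close>)
  then show ?thesis using assms by auto
qed

lemma uh4:
  assumes "ultrahomogeneous TYPE('a::linorder)" "x1 < x2" "x2 < x3" "x3 < x4"
    "y1 < y2" "y2 < y3" "y3 < (y4::'a)"
  shows "\<exists>f\<in>autS. f x1 = y1 \<and> f x2 = y2 \<and> f x3 = y3 \<and> f x4 = y4"
proof -
  have "\<exists>f\<in>autS. \<forall>x\<in>{x1,x2,x3,x4}. f x =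
     (\<lambda>z. if z = x1 then y1 else if z = x2 then y2 else if z = x3 then y3 else y4) x"
    by (rule uh_ext[OF assms(1)]) (use assms in \<open>auto simp: strict_mono_on_def\<close>)
  then obtain f where "f\<in>autS" "\<forall>x\<in>{x1,x2,x3,x4}. f x =
     (\<lambda>z. if z = x1 then y1 else if z = x2 then y2 else if z = x3 then y3 else y4) x" by blast
  then show ?thesis using assms by (intro bexI[of _ f]) auto
qed

lemma uh_gt:
  assumes "ultrahomogeneous TYPE('a::linorder)" "\<exists>x y :: 'a. x \<noteq> y"
  shows "\<exists>y. (x::'a) < y"
proof -
  obtain p q :: 'a where "p < q" using assms(2) by (metis linorder_neqE)
  obtain f where "f \<in> autS" "f p = x" using uh1[OF assms(1)] by blast
  then show ?thesis using \<open>p<q\<close> by (intro exI[of _ "f q"]) auto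
qed

lemma uh_lt:
  assumes "ultrahomogeneous TYPE('a::linorder)" "\<exists>x y :: 'a. x \<noteq> y"
  shows "\<exists>y. y < (x::'a)"
proof -
  obtain p q :: 'a where "p < q" using assms(2) by (metis linorder_neqE)
  obtain f where "f \<in> autS" "f q = x" using uh1[OF assms(1)] by blast
  then show ?thesis using \<open>p<q\<close> by (intro exI[of _ "f p"]) auto
qed

lemma uh_dense:
  assumes "ultrahomogeneous TYPE('a::linorder)" "\<exists>x y :: 'a. x \<noteq> y" "x < (y::'a)"
  shows "\<exists>z. x < z \<and> z < y"
proof -
  obtain p q :: 'a where "p < q" using assms(2) by (metis linorder_neqE)
  obtain r where "q < r" using uh_gt[OF assms(1,2)] by blast
  obtain f where "f \<in> autS" "f p = x" "f r = y" using uh2[OF assms(1) _ assms(3), of p r] \<open>p<q\<close> \<open>q<r\<close>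
    by (meson order.strict_trans)
  then show ?thesis using \<open>p<q\<close> \<open>q<r\<close> by (intro exI[of _ "f q"]) (metis autS_less)
qed

definition ndc :: "'a::linorder set \<Rightarrow> bool" where
  "ndc A \<longleftrightarrow> (\<forall>u v. u < v \<longrightarrow> (\<exists>u' v'. u \<le> u' \<and> u' < v' \<and> v' \<le> v \<and> {u'<..<v'} \<inter> A = {}))"

lemma nd_iff_ndc:
  fixes A :: "'a::linorder_topology set"
  assumes dense: "\<And>x y::'a. x < y \<Longrightarrow> \<exists>z. x < z \<and> z < y"
    and gt: "\<And>x::'a. \<exists>y. x < y" and lt: "\<And>x::'a. \<exists>y. y < x"
  shows "nowhere_dense A \<longleftrightarrow> ndc A"
proof
  assume nd: "nowhere_dense A"
  show "ndc A" unfolding ndc_def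
  proof (intro allI impI)
    fix u v :: 'a assume uv: "u < v"
    obtain z where z: "u < z" "z < v" using dense[OF uv] by blast
    have "\<not> {u<..<v} \<subseteq> closure A"
    proof
      assume "{u<..<v} \<subseteq> closure A"
      then have "{u<..<v} \<subseteq> interior (closure A)" by (simp add: interior_maximal)
      then show False using nd z by (auto simp: nowhere_dense_def)
    qed
    then obtain y where y: "y \<in> {u<..<v}" "y \<notin> closure A" by blast
    define T where "T = {u<..<v} - closure A"
    have oT: "open T" unfolding T_def by (simp add: open_Diff)
    have yT: "y \<in> T" using y by (simp add: T_def)
    obtain a where a: "a < y" "{a<..y} \<subseteq> T" using open_left[OF oT yT, of u] y by auto
    obtain b where b: "b > y" "{y..<b} \<subseteq> T" using open_right[OF oT yT, of v] y by auto
    have sub: "{a<..<b} \<subseteq> T"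
    proof
      fix x assume "x \<in> {a<..<b}"
      then show "x \<in> T" using a b by (cases "x \<le> y") auto
    qed
    show "\<exists>u' v'. u \<le> u' \<and> u' < v' \<and> v' \<le> v \<and> {u'<..<v'} \<inter> A = {}"
    proof (intro exI conjI)
      show "u \<le> max u a" by simp
      show "max u a < min v b" using a b y by auto
      show "min v b \<le> v" by simp
      show "{max u a<..<min v b} \<inter> A = {}"
        using sub closure_subset[of A] by (auto simp: T_def)
    qed
  qed
next
  assume c: "ndc A"
  show "nowhere_dense A" unfolding nowhere_dense_def
  proof (rule ccontr)
    assume "interior (closure A) \<noteq> {}"
    then obtain y where "y \<in> interior (closure A)" by blast
    then obtain T where T: "open T" "y \<in> T" "T \<subseteq> closure A" by (rule interiorE)
    obtain y1 where "y1 < y" using lt by blast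
    obtain y2 where "y < y2" using gt by blast
    obtain a where a: "a < y" "{a<..y} \<subseteq> T" using open_left[OF T(1,2) \<open>y1<y\<close>] by auto
    obtain b where b: "b > y" "{y..<b} \<subseteq> T" using open_right[OF T(1,2) \<open>y<y2\<close>] by auto
    have ab: "a < b" using a b by simp
    obtain u' v' where uv: "a \<le> u'" "u' < v'" "v' \<le> b" "{u'<..<v'} \<inter> A = {}"
      using c ab unfolding ndc_def by blast
    have "{u'<..<v'} \<inter> closure A = {}"
      using uv(4) open_Int_closure_eq_empty[of "{u'<..<v'}" A] by simp
    moreover have "{u'<..<v'} \<subseteq> closure A" proof
      fix x assume x: "x \<in> {u'<..<v'}"
      then have "x \<in> T"
      proof (cases "x \<le> y")
        case True then show ?thesis using a uv x by auto
      next
        case False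
        then have "x \<in> {y..<b}" using uv x by auto
        then show ?thesis using b by blast
      qed
      then show "x \<in> closure A" using T(3) by blast
    qed
    moreover obtain z where "u' < z" "z < v'" using dense[OF uv(2)] by blast
    ultimately show False by (metis Int_absorb2 empty_iff greaterThanLessThan_iff)
  qed
qed



lemma autS_le_inv1: "f \<in> autS \<Longrightarrow> (u \<le> f x) = (iv f u \<le> (x::'a::linorder))"
  using autS_le[of f "iv f u" x] by simp
lemma autS_le_inv2: "f \<in> autS \<Longrightarrow> (f x \<le> u) = (x \<le> iv f (u::'a::linorder))"
  using autS_le[of f x "iv f u"] by simp
lemma autS_less_inv1: "f \<in> autS \<Longrightarrow> (u < f x) = (iv f u < (x::'a::linorder))"
  using autS_less[of f "iv f u" x] by simp
lemma autS_less_inv2: "f \<in> autS \<Longrightarrow> (f x < u) = (x < iv f (u::'a::linorder))"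
  using autS_less[of f x "iv f u"] by simp

section \<open>Ideal facts\<close>

context
  fixes dummy :: "'a::linorder itself"
  assumes dense: "\<And>x y::'a. x < y \<Longrightarrow> \<exists>z. x < z \<and> z < y"
begin

lemma ndc_empty: "ndc ({}::'a set)"
  unfolding ndc_def by (metis Int_empty_right order_refl)

lemma ndc_subset: "ndc (A::'a set) \<Longrightarrow> B \<subseteq> A \<Longrightarrow> ndc B"
  unfolding ndc_def by blast

lemma ndc_Un: "ndc (A::'a set) \<Longrightarrow> ndc B \<Longrightarrow> ndc (A \<union> B)"
  unfolding ndc_def
proof (intro allI impI)
  fix u v :: 'a assume A: "\<forall>u v. u < v \<longrightarrow> (\<exists>u' v'. u \<le> u' \<and> u' < v' \<and> v' \<le> v \<and> {u'<..<v'} \<inter> A = {})"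
    and B: "\<forall>u v. u < v \<longrightarrow> (\<exists>u' v'. u \<le> u' \<and> u' < v' \<and> v' \<le> v \<and> {u'<..<v'} \<inter> B = {})"
    and uv: "u < v"
  obtain u1 v1 where 1: "u \<le> u1" "u1 < v1" "v1 \<le> v" "{u1<..<v1} \<inter> A = {}" using A uv by blast
  obtain u2 v2 where 2: "u1 \<le> u2" "u2 < v2" "v2 \<le> v1" "{u2<..<v2} \<inter> B = {}" using B 1(2) by blast
  show "\<exists>u' v'. u \<le> u' \<and> u' < v' \<and> v' \<le> v \<and> {u'<..<v'} \<inter> (A \<union> B) = {}"
  proof (intro exI conjI)
    show "u \<le> u2" "u2 < v2" "v2 \<le> v" using 1 2 by auto
    have "{u2<..<v2} \<subseteq> {u1<..<v1}" using 1 2 by auto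
    then show "{u2<..<v2} \<inter> (A \<union> B) = {}" using 1(4) 2(4) by blast
  qed
qed

lemma ndc_single: "ndc {x::'a}"
  unfolding ndc_def
proof (intro allI impI)
  fix u v :: 'a assume uv: "u < v"
  show "\<exists>u' v'. u \<le> u' \<and> u' < v' \<and> v' \<le> v \<and> {u'<..<v'} \<inter> {x} = {}"
  proof (cases "u < x \<and> x < v")
    case True
    then show ?thesis by (intro exI[of _ u] exI[of _ x]) auto
  next
    case False
    then show ?thesis using uv by (intro exI[of _ u] exI[of _ v]) auto
  qed
qed

lemma ndc_image: "f \<in> autS \<Longrightarrow> ndc (A::'a set) \<Longrightarrow> ndc (f ` A)"
  unfolding ndc_def
proof (intro allI impI)
  fix u v :: 'a assume f: "f \<in> autS"
    and A: "\<forall>u v. u < v \<longrightarrow> (\<exists>u' v'. u \<le> u' \<and> u' < v' \<and> v' \<le> v \<and> {u'<..<v'} \<inter> A = {})"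
    and uv: "u < v"
  have fi: "iv f \<in> autS" using f by (rule autS_inv)
  have "iv f u < iv f v" using fi uv by simp
  then obtain u1 v1 where 1: "iv f u \<le> u1" "u1 < v1" "v1 \<le> iv f v" "{u1<..<v1} \<inter> A = {}"
    using A by blast
  show "\<exists>u' v'. u \<le> u' \<and> u' < v' \<and> v' \<le> v \<and> {u'<..<v'} \<inter> f ` A = {}"
  proof (intro exI conjI)
    show "u \<le> f u1" using 1 f by (simp add: autS_le_inv1)
    show "f u1 < f v1" using 1 f by simp
    show "f v1 \<le> v" using 1 f by (simp add: autS_le_inv2)
    show "{f u1<..<f v1} \<inter> f ` A = {}" using 1(4) f by auto
  qed
qed

end

section \<open>Gluing\<close>

definition glue2 :: "'a::linorder \<Rightarrow> ('a \<Rightarrow> 'a) \<Rightarrow> ('a \<Rightarrow> 'a) \<Rightarrow> 'a \<Rightarrow> 'a" where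
  "glue2 p f1 f2 x = (if x \<le> p then f1 x else f2 x)"

lemma glue2_aut:
  assumes "f1 \<in> autS" "f2 \<in> autS" "f1 p = f2 p"
  shows "glue2 p f1 f2 \<in> autS"
proof -
  have sm: "strict_mono (glue2 p f1 f2)"
  proof (rule strict_monoI)
    fix x y :: 'a assume xy: "x < y"
    show "glue2 p f1 f2 x < glue2 p f1 f2 y"
    proof (cases "y \<le> p")
      case True then show ?thesis using xy assms by (auto simp: glue2_def)
    next
      case False
      show ?thesis
      proof (cases "x \<le> p")
        case True
        have "f1 x \<le> f1 p" using True assms(1) by simp
        also have "\<dots> = f2 p" by fact
        also have "\<dots> < f2 y" using False assms by simp
        finally show ?thesis using True False by (simp add: glue2_def)
      next
        case False2: False
        then show ?thesis using False xy assms by (auto simp: glue2_def)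
      qed
    qed
  qed
  have "surj (glue2 p f1 f2)"
  proof (rule surjI)
    fix y
    show "glue2 p f1 f2 (if y \<le> f1 p then iv f1 y else iv f2 y) = y"
    proof (cases "y \<le> f1 p")
      case True
      then have "iv f1 y \<le> p" using assms(1) by (simp add: autS_le_inv1)
      then show ?thesis using True assms by (simp add: glue2_def)
    next
      case False
      then have "\<not> iv f2 y \<le> p" using assms autS_le_inv1[OF assms(2), of y p] by simp
      then show ?thesis using False by (simp add: glue2_def assms(2))
    qed
  qed
  then show ?thesis using sm by (simp add: autS_def bij_def strict_mono_imp_inj_on)
qed

definition ocvx :: "'a::linorder set \<Rightarrow> bool" where
  "ocvx S \<longleftrightarrow> (\<forall>x\<in>S. \<forall>y\<in>S. \<forall>z. x \<le> z \<and> z \<le> y \<longrightarrow> z \<in> S)"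

definition glue :: "'i set \<Rightarrow> ('i \<Rightarrow> 'a set) \<Rightarrow> ('i \<Rightarrow> 'a \<Rightarrow> 'a) \<Rightarrow> 'a \<Rightarrow> 'a" where
  "glue I C F x = (if \<exists>i\<in>I. x \<in> C i then F (SOME i. i \<in> I \<and> x \<in> C i) x else x)"

lemma glue_in:
  assumes disj: "\<And>i j. i \<in> I \<Longrightarrow> j \<in> I \<Longrightarrow> i \<noteq> j \<Longrightarrow> C i \<inter> C j = {}"
    and "i \<in> I" "x \<in> C i"
  shows "glue I C F x = F i x"
proof -
  have "(SOME i. i \<in> I \<and> x \<in> C i) = i"
    using assms by (intro some_equality) blast+
  then show ?thesis using assms by (auto simp: glue_def)
qed

lemma glue_out: "(\<And>i. i \<in> I \<Longrightarrow> x \<notin> C i) \<Longrightarrow> glue I C F x = x"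
  by (auto simp: glue_def)

lemma cvx_order:
  fixes P Q :: "'a::linorder set"
  assumes "ocvx P" "ocvx Q" "P \<inter> Q = {}" "x \<in> P" "y \<in> Q" "x < y" "p \<in> P" "q \<in> Q"
  shows "p < q"
proof (rule ccontr)
  assume "\<not> p < q"
  then have qp: "q \<le> p" by simp
  show False
  proof (cases "y \<le> p")
    case True
    then have "y \<in> P" using assms unfolding ocvx_def by (meson less_imp_le)
    then show False using assms by blast
  next
    case False
    show False
    proof (cases "x \<le> q")
      case True
      then have "q \<in> P" using assms qp unfolding ocvx_def by blast
      then show False using assms by blast
    next
      case False2: False
      then have "x \<in> Q" using assms False qp unfolding ocvx_def by (meson less_imp_le not_le)
      then show False using assms by blast
    qed
  qed
qed

lemma cvx_below:
  fixes P :: "'a::linorder set"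
  assumes "ocvx P" "y \<notin> P" "x \<in> P" "x < y" "p \<in> P"
  shows "p < y"
proof (rule ccontr)
  assume "\<not> p < y"
  then have "y \<in> P" using assms unfolding ocvx_def by (meson less_imp_le not_le)
  then show False using assms by blast
qed

lemma cvx_above:
  fixes P :: "'a::linorder set"
  assumes "ocvx P" "y \<notin> P" "x \<in> P" "y < x" "p \<in> P"
  shows "y < p"
proof (rule ccontr)
  assume "\<not> y < p"
  then have "y \<in> P" using assms unfolding ocvx_def by (meson less_imp_le not_le)
  then show False using assms by blast
qed

lemma glue_aut:
  fixes C :: "'i \<Rightarrow> 'a::linorder set"
  assumes disj: "\<And>i j. i \<in> I \<Longrightarrow> j \<in> I \<Longrightarrow> i \<noteq> j \<Longrightarrow> C i \<inter> C j = {}"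
    and cvx: "\<And>i. i \<in> I \<Longrightarrow> ocvx (C i)"
    and img: "\<And>i. i \<in> I \<Longrightarrow> F i ` C i = C i"
    and sm: "\<And>i. i \<in> I \<Longrightarrow> strict_mono_on (C i) (F i)"
  shows "glue I C F \<in> autS"
proof -
  let ?g = "glue I C F"
  have sm': "strict_mono ?g"
  proof (rule strict_monoI)
    fix x y :: 'a assume xy: "x < y"
    show "?g x < ?g y"
    proof (cases "\<exists>i\<in>I. x \<in> C i")
      case True
      then obtain i where i: "i \<in> I" "x \<in> C i" by blast
      have gx: "?g x = F i x" by (rule glue_in[where I=I and C=C and F=F, OF disj i])
      have fxi: "F i x \<in> C i" using img[OF i(1)] i by blast
      show ?thesis
      proof (cases "\<exists>j\<in>I. y \<in> C j")
        case True
        then obtain j where j: "j \<in> I" "y \<in> C j" by blast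
        have gy: "?g y = F j y" by (rule glue_in[where I=I and C=C and F=F, OF disj j])
        have fyj: "F j y \<in> C j" using img[OF j(1)] j by blast
        show ?thesis
        proof (cases "i = j")
          case True
          then show ?thesis using sm[OF i(1)] i j xy gx gy by (simp add: strict_mono_on_def)
        next
          case False
          show ?thesis unfolding gx gy
            by (rule cvx_order[OF cvx[OF i(1)] cvx[OF j(1)] disj[OF i(1) j(1) False] i(2) j(2) xy fxi fyj])
        qed
      next
        case False
        then have gy: "?g y = y" by (intro glue_out) blast
        have "y \<notin> C i" using False i by blast
        then show ?thesis unfolding gx gy using cvx_below[OF cvx[OF i(1)] _ i(2) xy fxi] by blast
      qed
    next
      case False
      then have gx: "?g x = x" by (intro glue_out) blast
      show ?thesis
      proof (cases "\<exists>j\<in>I. y \<in> C j")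
        case True
        then obtain j where j: "j \<in> I" "y \<in> C j" by blast
        have gy: "?g y = F j y" by (rule glue_in[where I=I and C=C and F=F, OF disj j])
        have fyj: "F j y \<in> C j" using img[OF j(1)] j by blast
        have "x \<notin> C j" using False j by blast
        then show ?thesis unfolding gx gy using cvx_above[OF cvx[OF j(1)] _ j(2) xy fyj] by blast
      next
        case False
        then have gy: "?g y = y" by (intro glue_out) blast
        then show ?thesis using gx xy by simp
      qed
    qed
  qed
  have "surj ?g"
  proof -
    have "y \<in> range ?g" for y
    proof (cases "\<exists>i\<in>I. y \<in> C i")
      case True
      then obtain i where i: "i \<in> I" "y \<in> C i" by blast
      then obtain x where x: "x \<in> C i" "F i x = y" using img[OF i(1)] by (metis imageE)
      have "?g x = y" using glue_in[where I=I and C=C and F=F, OF disj i(1) x(1)] x by simp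
      then show ?thesis by (metis rangeI)
    next
      case False
      then have "?g y = y" by (intro glue_out) blast
      then show ?thesis by (metis rangeI)
    qed
    then show ?thesis by blast
  qed
  then show ?thesis using sm' by (simp add: autS_def bij_def strict_mono_imp_inj_on)
qed

lemma ocvx_interval: "ocvx {a<..<b::'a::linorder}"
  unfolding ocvx_def by auto

lemma aut_fix_interval:
  assumes "f \<in> autS" "f a = a" "f b = b"
  shows "f ` {a<..<b} = {a<..<b}" "strict_mono_on {a<..<b} f"
proof -
  show "strict_mono_on {a<..<b} f" using assms by (simp add: strict_mono_on_def)
  show "f ` {a<..<b} = {a<..<b}"
  proof
    show "f ` {a<..<b} \<subseteq> {a<..<b}"
    proof
      fix y assume "y \<in> f ` {a<..<b}"
      then obtain x where x: "a < x" "x < b" "y = f x" by auto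
      have "f a < f x" "f x < f b" using x assms(1) by simp_all
      then show "y \<in> {a<..<b}" using x assms by simp
    qed
    show "{a<..<b} \<subseteq> f ` {a<..<b}"
    proof
      fix y assume y: "y \<in> {a<..<b}"
      have "iv f (f a) < iv f y" "iv f y < iv f (f b)"
        using y assms(2,3) autS_less[OF autS_inv[OF assms(1)]] by auto
      then have "iv f y \<in> {a<..<b}" using assms(1) by simp
      then show "y \<in> f ` {a<..<b}" by (rule image_eqI[rotated]) (simp add: assms(1))
    qed
  qed
qed

section \<open>Splitting into up and down parts\<close>

definition gup :: "('a::linorder \<Rightarrow> 'a) \<Rightarrow> 'a \<Rightarrow> 'a" where
  "gup g x = (if x < g x then g x else x)"
definition gdn :: "('a::linorder \<Rightarrow> 'a) \<Rightarrow> 'a \<Rightarrow> 'a" where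
  "gdn g x = (if g x < x then g x else x)"

lemma gup_aut: assumes g: "g \<in> autS" shows "gup g \<in> autS"
proof -
  have sm: "strict_mono (gup g)"
  proof (rule strict_monoI)
    fix x y :: 'a assume xy: "x < y"
    have gxy: "g x < g y" using g xy by simp
    show "gup g x < gup g y"
      using xy gxy by (auto simp: gup_def)
  qed
  have "surj (gup g)"
  proof (rule surjI)
    fix y
    show "gup g (if iv g y < y then iv g y else y) = y"
    proof (cases "iv g y < y")
      case True
      then have "iv g y < g (iv g y)" using g by simp
      then show ?thesis using True g by (simp add: gup_def)
    next
      case False
      then have "g y \<le> g (iv g y)" using g by (simp del: autS_f_inv)
      then have "\<not> y < g y" using g by simp
      then show ?thesis using False by (simp add: gup_def)
    qed
  qed
  then show ?thesis using sm by (simp add: autS_def bij_def strict_mono_imp_inj_on)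
qed

lemma gdn_aut: assumes g: "g \<in> autS" shows "gdn g \<in> autS"
proof -
  have sm: "strict_mono (gdn g)"
  proof (rule strict_monoI)
    fix x y :: 'a assume xy: "x < y"
    have gxy: "g x < g y" using g xy by simp
    show "gdn g x < gdn g y"
      using xy gxy by (auto simp: gdn_def)
  qed
  have "surj (gdn g)"
  proof (rule surjI)
    fix y
    show "gdn g (if y < iv g y then iv g y else y) = y"
    proof (cases "y < iv g y")
      case True
      then have "g (iv g y) < iv g y" using g by simp
      then show ?thesis using True g by (simp add: gdn_def)
    next
      case False
      then have "g (iv g y) \<le> g y" using g by (simp del: autS_f_inv)
      then have "\<not> g y < y" using g by simp
      then show ?thesis using False by (simp add: gdn_def)
    qed
  qed
  then show ?thesis using sm by (simp add: autS_def bij_def strict_mono_imp_inj_on)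
qed

lemma gup_gdn: assumes g: "g \<in> autS" shows "gup g \<circ> gdn g = g"
proof
  fix x
  show "(gup g \<circ> gdn g) x = g x"
  proof (cases "g x < x")
    case True
    then have "g (g x) < g x" using g by simp
    then show ?thesis using True by (auto simp: gup_def gdn_def)
  next
    case False
    then show ?thesis by (auto simp: gup_def gdn_def)
  qed
qed

lemma gup_ge: "x \<le> gup g x" by (auto simp add: gup_def)
lemma gdn_inv_ge: assumes "gdn g \<in> autS" shows "x \<le> iv (gdn g) x"
proof -
  have "gdn g (iv (gdn g) x) \<le> iv (gdn g) x" by (auto simp add: gdn_def)
  then show ?thesis using assms by simp
qed



lemma pstab_eq: "pstab (order_aut_group::('a::linorder \<Rightarrow> 'a) monoid) (\<lambda>f x. f x) a = {f \<in> autS. \<forall>x\<in>a. f x = x}"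
  by (simp add: pstab_def)

lemma subgroup_pstab: "subgroup {f \<in> autS. \<forall>x\<in>a. f x = x} (order_aut_group::('a::linorder \<Rightarrow> 'a) monoid)"
proof (rule group.subgroupI[OF group_oag])
  show "{f \<in> autS. \<forall>x\<in>a. f x = x} \<subseteq> carrier (order_aut_group::('a::linorder \<Rightarrow> 'a) monoid)" by auto
  show "{f \<in> autS. \<forall>x\<in>a. f x = x} \<noteq> {}" using autS_id by auto
next
  fix f :: "'a \<Rightarrow> 'a" assume f: "f \<in> {f \<in> autS. \<forall>x\<in>a. f x = x}"
  then have "\<forall>x\<in>a. iv f x = x" by (metis (mono_tags, lifting) autS_inv_f mem_Collect_eq)
  then show "m_inv order_aut_group f \<in> {f \<in> autS. \<forall>x\<in>a. f x = x}" using f by (simp add: autS_inv)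
next
  fix f g :: "'a \<Rightarrow> 'a" assume "f \<in> {f \<in> autS. \<forall>x\<in>a. f x = x}" "g \<in> {f \<in> autS. \<forall>x\<in>a. f x = x}"
  then show "f \<otimes>\<^bsub>order_aut_group\<^esub> g \<in> {f \<in> autS. \<forall>x\<in>a. f x = x}" by (simp add: autS_comp)
qed

locale core =
  fixes a b :: "'a::linorder set" and N :: "('a \<Rightarrow> 'a) set"
  assumes uh: "ultrahomogeneous TYPE('a)" and two: "\<exists>x y::'a. x \<noteq> y"
    and bnd: "ndc b" and ab: "a \<subseteq> b"
    and Nn: "normal N ((order_aut_group::('a \<Rightarrow> 'a) monoid)\<lparr>carrier := {f \<in> autS. \<forall>x\<in>a. f x = x}\<rparr>)"
    and Nb: "{f \<in> autS. \<forall>x\<in>b. f x = x} \<subseteq> N"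
begin

abbreviation "PA \<equiv> {f \<in> autS. \<forall>x\<in>a. f x = x}"
abbreviation "GA \<equiv> (order_aut_group::('a \<Rightarrow> 'a) monoid)\<lparr>carrier := PA\<rparr>"

lemma dense: "x < (y::'a) \<Longrightarrow> \<exists>z. x < z \<and> z < y" using uh_dense[OF uh two] by blast

lemma N_sub: "N \<subseteq> PA"
proof -
  have "subgroup N GA" using Nn by (rule normal_imp_subgroup)
  then have "N \<subseteq> carrier GA" by (rule subgroup.subset)
  then show ?thesis by simp
qed

lemma N_comp: "f \<in> N \<Longrightarrow> g \<in> N \<Longrightarrow> f \<circ> g \<in> N"
  using subgroup.m_closed[OF normal_imp_subgroup[OF Nn], of f g] by simp

lemma GA_inv: "f \<in> PA \<Longrightarrow> m_inv GA f = iv f"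
  using group.m_inv_consistent[OF group_oag subgroup_pstab, of f a] by simp

lemma N_inv: "f \<in> N \<Longrightarrow> iv f \<in> N"
  using subgroup.m_inv_closed[OF normal_imp_subgroup[OF Nn], of f] GA_inv N_sub by auto

lemma N_conj: "k \<in> PA \<Longrightarrow> q \<in> N \<Longrightarrow> k \<circ> q \<circ> iv k \<in> N"
  using normal.inv_op_closed2[OF Nn, of k q] GA_inv by simp

lemma conj_fix:
  assumes k: "k \<in> PA" and f: "f \<in> PA" and fx: "\<forall>y\<in>b. f (k y) = k y"
  shows "f \<in> N"
proof -
  have ka: "k \<in> autS" using k by simp
  define q where "q = iv k \<circ> f \<circ> k"
  have "q \<in> autS" unfolding q_def using ka f by (simp add: autS_comp autS_inv)
  moreover have "\<forall>x\<in>b. q x = x" unfolding q_def using fx ka by simp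
  ultimately have "q \<in> N" using Nb by blast
  then have "k \<circ> q \<circ> iv k \<in> N" by (rule N_conj[OF k])
  moreover have "k \<circ> q \<circ> iv k = f" unfolding q_def using ka by (simp add: fun_eq_iff)
  ultimately show ?thesis by simp
qed

lemma cell_push:
  assumes "m < c" "c < d" "d < (m'::'a)"
  shows "\<exists>\<phi>\<in>autS. \<phi> m = m \<and> \<phi> m' = m' \<and> (\<forall>x\<in>b. \<not> (c < \<phi> x \<and> \<phi> x < d))"
proof -
  have "m < m'" using assms by simp
  then obtain u v where uv: "m \<le> u" "u < v" "v \<le> m'" "{u<..<v} \<inter> b = {}"
    using bnd unfolding ndc_def by blast
  obtain u2 where u2: "u < u2" "u2 < v" using dense[OF uv(2)] by blast
  obtain v2 where v2: "u2 < v2" "v2 < v" using dense[OF u2(2)] by blast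
  have "m < u2" "v2 < m'" using uv u2 v2 by auto
  then obtain \<phi> where \<phi>: "\<phi> \<in> autS" "\<phi> m = m" "\<phi> u2 = c" "\<phi> v2 = d" "\<phi> m' = m'"
    using uh4[OF uh \<open>m < u2\<close> \<open>u2 < v2\<close> \<open>v2 < m'\<close> assms] by blast
  have "\<forall>x\<in>b. \<not> (c < \<phi> x \<and> \<phi> x < d)"
  proof (intro ballI notI)
    fix x assume x: "x \<in> b" "c < \<phi> x \<and> \<phi> x < d"
    then have "u2 < x" "x < v2" using \<phi> by (metis autS_less)+
    then have "x \<in> {u<..<v}" using u2 v2 by auto
    then show False using x(1) uv(4) by blast
  qed
  then show ?thesis using \<phi> by blast
qed

lemma lemmaK:
  fixes m c d m' :: "'i \<Rightarrow> 'a"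
  assumes f: "f \<in> PA"
    and ord: "\<And>i. i \<in> I \<Longrightarrow> m i < c i \<and> c i < d i \<and> d i < m' i"
    and disj: "\<And>i j. i \<in> I \<Longrightarrow> j \<in> I \<Longrightarrow> i \<noteq> j \<Longrightarrow> {m i<..<m' i} \<inter> {m j<..<m' j} = {}"
    and afree: "\<And>i. i \<in> I \<Longrightarrow> {m i<..<m' i} \<inter> a = {}"
    and supp: "\<And>x. (\<forall>i\<in>I. \<not> (c i < x \<and> x < d i)) \<Longrightarrow> f x = x"
  shows "f \<in> N"
proof -
  define \<Phi> where "\<Phi> i = (SOME \<phi>. \<phi> \<in> autS \<and> \<phi> (m i) = m i \<and> \<phi> (m' i) = m' i \<and>
      (\<forall>x\<in>b. \<not> (c i < \<phi> x \<and> \<phi> x < d i)))" for i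
  have \<Phi>: "\<Phi> i \<in> autS \<and> \<Phi> i (m i) = m i \<and> \<Phi> i (m' i) = m' i \<and>
      (\<forall>x\<in>b. \<not> (c i < \<Phi> i x \<and> \<Phi> i x < d i))" if "i \<in> I" for i
  proof -
    have o: "m i < c i" "c i < d i" "d i < m' i" using ord[OF that] by auto
    obtain \<phi> where ph: "\<phi>\<in>autS \<and> \<phi> (m i) = m i \<and> \<phi> (m' i) = m' i \<and> (\<forall>x\<in>b. \<not> (c i < \<phi> x \<and> \<phi> x < d i))"
      using cell_push[OF o] by blast
    show ?thesis unfolding \<Phi>_def by (rule someI[where P="\<lambda>\<phi>. \<phi>\<in>autS \<and> \<phi> (m i) = m i \<and> \<phi> (m' i) = m' i \<and> (\<forall>x\<in>b. \<not> (c i < \<phi> x \<and> \<phi> x < d i))", OF ph])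
  qed
  define C where "C i = {m i<..<m' i}" for i
  define k where "k = glue I C \<Phi>"
  have disjC: "\<And>i j. i \<in> I \<Longrightarrow> j \<in> I \<Longrightarrow> i \<noteq> j \<Longrightarrow> C i \<inter> C j = {}"
    using disj by (simp add: C_def)
  have Pa: "\<Phi> i \<in> autS" "\<Phi> i (m i) = m i" "\<Phi> i (m' i) = m' i"
      "\<And>x. x \<in> b \<Longrightarrow> \<not> (c i < \<Phi> i x \<and> \<Phi> i x < d i)" if "i \<in> I" for i
    using \<Phi>[OF that] by blast+
  have ka: "k \<in> autS" unfolding k_def
  proof (rule glue_aut[OF disjC])
    fix i assume i: "i \<in> I"
    show "ocvx (C i)" by (simp add: C_def ocvx_interval)
    show "\<Phi> i ` C i = C i" "strict_mono_on (C i) (\<Phi> i)"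
      unfolding C_def using aut_fix_interval[OF Pa(1-3)[OF i]] by simp_all
  qed
  have kP: "k \<in> PA"
  proof -
    have "k x = x" if "x \<in> a" for x
      unfolding k_def by (rule glue_out) (use afree that in \<open>unfold C_def, blast\<close>)
    then show ?thesis using ka by auto
  qed
  have "\<forall>y\<in>b. f (k y) = k y"
  proof
    fix y assume y: "y \<in> b"
    have "\<forall>j\<in>I. \<not> (c j < k y \<and> k y < d j)"
    proof (cases "\<exists>i\<in>I. y \<in> C i")
      case True
      then obtain i where i: "i \<in> I" "y \<in> C i" by blast
      have ky: "k y = \<Phi> i y" unfolding k_def by (rule glue_in[where I=I and C=C, OF disjC i])
      have "\<Phi> i y \<in> C i" using aut_fix_interval(1)[OF Pa(1-3)[OF i(1)]] i(2)
        unfolding C_def by blast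
      show ?thesis
      proof
        fix j assume j: "j \<in> I"
        show "\<not> (c j < k y \<and> k y < d j)"
        proof (cases "j = i")
          case True then show ?thesis using Pa(4)[OF i(1) y] ky by simp
        next
          case False
          then have "C i \<inter> C j = {}" using disjC[OF i(1) j] by metis
          then have "k y \<notin> C j" using \<open>\<Phi> i y \<in> C i\<close> ky by (metis disjoint_iff)
          then show ?thesis using ord[OF j] unfolding C_def by (meson greaterThanLessThan_iff less_trans)
        qed
      qed
    next
      case False
      then have "k y = y" unfolding k_def by (intro glue_out) blast
      show ?thesis
      proof (intro ballI notI)
        fix j assume j: "j \<in> I" "c j < k y \<and> k y < d j"
        then have "y \<in> C j" using ord[OF j(1)] \<open>k y = y\<close> unfolding C_def by (metis greaterThanLessThan_iff less_trans)
        then show False using False j(1) by blast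
      qed
    qed
    then show "f (k y) = k y" by (rule supp)
  qed
  then show ?thesis by (rule conj_fix[OF kP f])
qed

end



locale upc = core +
  fixes g :: "'a \<Rightarrow> 'a"
  assumes gPA: "g \<in> PA" and g_ge: "\<And>x. x \<le> g x"
begin

lemma gA: "g \<in> autS" using gPA by simp

definition P :: "int \<Rightarrow> 'a \<Rightarrow> 'a" where
  "P n = g [^]\<^bsub>(order_aut_group::('a \<Rightarrow> 'a) monoid)\<^esub> n"

lemma P_aut: "P n \<in> autS"
  unfolding P_def using group.int_pow_closed[OF group_oag, of g n] gA by simp

lemma P_add: "P (m + n) x = P m (P n x)"
  unfolding P_def using group.int_pow_mult[OF group_oag, of g m n] gA by simp

lemma P_0[simp]: "P 0 x = x"
  unfolding P_def by simp

lemma P_1[simp]: "P 1 x = g x"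
  unfolding P_def using group.int_pow_1[OF group_oag, of g] gA by simp

lemma P_cancel[simp]: "P (-n) (P n x) = x" "P n (P (-n) x) = x"
  using P_add[of "-n" n x] P_add[of n "-n" x] by simp_all

lemma P_succ: "P (n + 1) x = P n (g x)" using P_add[of n 1 x] by simp
lemma P_succ': "P (n + 1) x = g (P n x)" using P_add[of 1 n x] by (simp add: add.commute)

lemma P_fix: assumes "g y = y" shows "P n y = y"
proof (induct n rule: int_induct[where k=0])
  case base then show ?case by simp
next
  case (step1 i) then show ?case using P_succ[of i y] assms by simp
next
  case (step2 i)
  have "P i y = P (i - 1) y" using P_succ[of "i - 1" y] assms by simp
  then show ?case using step2 by simp
qed

lemma P_ge_nat: "y \<le> P (int k) y"
proof (induct k arbitrary: y)
  case 0 then show ?case by simp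
next
  case (Suc k)
  have "P (int (Suc k)) y = P (int k) (g y)" using P_succ[of "int k" y] by (simp add: add.commute)
  moreover have "y \<le> g y" by (rule g_ge)
  moreover have "g y \<le> P (int k) (g y)" by (rule Suc)
  ultimately show ?case by simp
qed

lemma P_ge: "0 \<le> k \<Longrightarrow> y \<le> P k y"
  using P_ge_nat[of y "nat k"] by simp

lemma P_le: "m \<le> n \<Longrightarrow> P m y \<le> P n y"
proof -
  assume "m \<le> n"
  have "P (n - m) y \<ge> y" using P_ge \<open>m \<le> n\<close> by simp
  then have "P m (P (n - m) y) \<ge> P m y" using P_aut by simp
  then show ?thesis using P_add[of m "n - m" y] by simp
qed

lemma P_lt: assumes "x < g x" "m < n" shows "P m x < P n x"
proof -
  have "P (n - m - 1) (g x) \<ge> g x" using P_ge assms by simp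
  then have "P (n - m) x > x" using P_succ[of "n - m - 1" x] assms by simp
  then have "P m (P (n - m) x) > P m x" using P_aut by simp
  then show ?thesis using P_add[of m "n - m" x] by simp
qed

lemma P_move: "P m x \<le> y \<longleftrightarrow> x \<le> P (-m) y"
  using autS_le[OF P_aut, of "-m" "P m x" y] by simp
lemma P_move2: "y \<le> P m x \<longleftrightarrow> P (-m) y \<le> x"
  using autS_le[OF P_aut, of "-m" y "P m x"] by simp

definition rel :: "'a \<Rightarrow> 'a \<Rightarrow> bool" where
  "rel x y \<longleftrightarrow> (\<exists>m n. P m x \<le> y \<and> y \<le> P n x)"

lemma rel_refl: "rel x x" unfolding rel_def by (intro exI[of _ 0]) simp

lemma rel_sym: "rel x y \<Longrightarrow> rel y x"
  unfolding rel_def using P_move P_move2 by blast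

lemma rel_trans: assumes "rel x y" "rel y z" shows "rel x z"
proof -
  obtain m n where 1: "P m x \<le> y" "y \<le> P n x" using assms(1) rel_def by blast
  obtain m' n' where 2: "P m' y \<le> z" "z \<le> P n' y" using assms(2) rel_def by blast
  have "P (m' + m) x \<le> z" using 1 2 P_add[of m' m x] P_aut[of m'] by (metis autS_le order_trans)
  moreover have "z \<le> P (n' + n) x" using 1 2 P_add[of n' n x] P_aut[of n'] by (metis autS_le order_trans)
  ultimately show ?thesis unfolding rel_def by blast
qed

definition M :: "'a set" where "M = {x. x < g x}"

lemma rel_M: assumes "x \<in> M" "rel x y" shows "y \<in> M"
proof (rule ccontr)
  assume "y \<notin> M"
  then have gy: "g y = y" using g_ge[of y] by (simp add: M_def)
  obtain m n where 1: "P m x \<le> y" "y \<le> P n x" using assms(2) rel_def by blast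
  have "x \<le> y" using 1(1) P_move P_fix[OF gy] by metis
  moreover have "y \<le> x" using 1(2) P_move2 P_fix[OF gy] by metis
  ultimately have "x = y" by simp
  then show False using assms(1) gy by (simp add: M_def)
qed

lemma aM: "a \<inter> M = {}" using gPA by (auto simp: M_def)

definition rep :: "'a \<Rightarrow> 'a" where "rep x = (SOME z. rel x z)"

lemma rel_rep: "rel x (rep x)"
  unfolding rep_def by (rule someI[of _ x]) (rule rel_refl)

lemma rep_eq: assumes "rel x y" shows "rep x = rep y"
proof -
  have "{z. rel x z} = {z. rel y z}" using assms rel_trans rel_sym by blast
  then have "rel x = rel y" by (simp add: fun_eq_iff) (metis mem_Collect_eq)
  then show ?thesis unfolding rep_def by simp
qed

definition R :: "'a set" where "R = rep ` M"

lemma R_M: "x0 \<in> R \<Longrightarrow> x0 \<in> M"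
  unfolding R_def using rel_M rel_rep by blast

lemma R_rep: "x0 \<in> R \<Longrightarrow> rep x0 = x0"
  unfolding R_def using rep_eq rel_rep by (metis imageE)

lemma rel_R_eq: "x0 \<in> R \<Longrightarrow> x1 \<in> R \<Longrightarrow> rel x0 y \<Longrightarrow> rel x1 y \<Longrightarrow> x0 = x1"
  using R_rep rep_eq by metis


definition Qp :: "'a \<Rightarrow> 'a \<times> 'a \<times> 'a \<times> 'a \<times> 'a \<Rightarrow> bool" where
  "Qp x0 p = (case p of (s, e, u, e', t) \<Rightarrow>
     x0 < s \<and> s < e \<and> e < u \<and> u < e' \<and> e' < g x0 \<and> g e' < t \<and> t < g (g x0))"

definition pts :: "'a \<Rightarrow> 'a \<times> 'a \<times> 'a \<times> 'a \<times> 'a" where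
  "pts x0 = (SOME p. Qp x0 p)"

definition "pS x0 = fst (pts x0)"
definition "pE x0 = fst (snd (pts x0))"
definition "pU x0 = fst (snd (snd (pts x0)))"
definition "pE' x0 = fst (snd (snd (snd (pts x0))))"
definition "pT x0 = snd (snd (snd (snd (pts x0))))"

lemma pts_prop:
  assumes "x0 \<in> M"
  shows "x0 < pS x0" "pS x0 < pE x0" "pE x0 < pU x0" "pU x0 < pE' x0" "pE' x0 < g x0"
    "g (pE' x0) < pT x0" "pT x0 < g (g x0)"
proof -
  have x0: "x0 < g x0" using assms by (simp add: M_def)
  obtain s where s: "x0 < s" "s < g x0" using dense[OF x0] by blast
  obtain e where e: "s < e" "e < g x0" using dense[OF s(2)] by blast
  obtain u where u: "e < u" "u < g x0" using dense[OF e(2)] by blast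
  obtain e' where e': "u < e'" "e' < g x0" using dense[OF u(2)] by blast
  have "g e' < g (g x0)" using e' gA by simp
  then obtain t where t: "g e' < t" "t < g (g x0)" using dense by blast
  have "Qp x0 (s, e, u, e', t)" unfolding Qp_def using s e u e' t by simp
  then have "Qp x0 (pts x0)" unfolding pts_def by (rule someI)
  then show "x0 < pS x0" "pS x0 < pE x0" "pE x0 < pU x0" "pU x0 < pE' x0" "pE' x0 < g x0"
    "g (pE' x0) < pT x0" "pT x0 < g (g x0)"
    unfolding Qp_def pS_def pE_def pU_def pE'_def pT_def by (simp_all split: prod.splits)
qed

definition hprop :: "'a \<Rightarrow> ('a \<Rightarrow> 'a) \<Rightarrow> bool" where
  "hprop x0 h \<longleftrightarrow> h \<in> autS \<and> (\<forall>z. z \<le> pS x0 \<longrightarrow> h z = z) \<and>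
     (\<forall>z. pE x0 \<le> z \<and> z \<le> pE' x0 \<longrightarrow> h z = g z) \<and> (\<forall>z. pT x0 \<le> z \<longrightarrow> h z = z)"

lemma h_ex: assumes "x0 \<in> M" shows "\<exists>h. hprop x0 h"
proof -
  note pp = pts_prop[OF assms]
  define s where "s = pS x0"
  define e where "e = pE x0"
  define e' where "e' = pE' x0"
  define t where "t = pT x0"
  have o1: "s < e" "e < e'" "e' < t" using pp g_ge[of e'] unfolding s_def e_def e'_def t_def
    by (auto intro: less_le_trans)
  have o2: "s < g e" "g e < g e'" "g e' < t" using o1 g_ge[of e] pp gA unfolding t_def e'_def
    by (auto intro: less_le_trans)
  obtain \<phi> where \<phi>: "\<phi> \<in> autS" "\<phi> s = s" "\<phi> e = g e" "\<phi> e' = g e'" "\<phi> t = t"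
    using uh4[OF uh o1 o2] by blast
  define A4 where "A4 = glue2 t \<phi> id"
  define A3 where "A3 = glue2 e' g A4"
  define A2 where "A2 = glue2 e \<phi> A3"
  define A1 where "A1 = glue2 s id A2"
  have a4: "A4 \<in> autS" unfolding A4_def by (rule glue2_aut) (simp_all add: \<phi> autS_id)
  have a3: "A3 \<in> autS" unfolding A3_def
    by (rule glue2_aut[OF gA a4]) (use o1 \<phi> in \<open>auto simp add: A4_def glue2_def\<close>)
  have a2: "A2 \<in> autS" unfolding A2_def
    by (rule glue2_aut[OF \<phi>(1) a3]) (use o1 \<phi> in \<open>auto simp add: A3_def glue2_def\<close>)
  have a1: "A1 \<in> autS" unfolding A1_def
    by (rule glue2_aut[OF autS_id a2]) (use o1 \<phi> in \<open>auto simp add: A2_def glue2_def\<close>)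
  have "hprop x0 A1" unfolding hprop_def
  proof (intro conjI allI impI)
    show "A1 \<in> autS" by (rule a1)
    fix z
    show "z \<le> pS x0 \<Longrightarrow> A1 z = z" by (simp add: A1_def glue2_def s_def)
    show "pE x0 \<le> z \<and> z \<le> pE' x0 \<Longrightarrow> A1 z = g z"
      using o1 \<phi> by (auto simp: A1_def A2_def A3_def glue2_def s_def e_def e'_def)
    show "pT x0 \<le> z \<Longrightarrow> A1 z = z"
      using o1 \<phi> by (auto simp: A1_def A2_def A3_def A4_def glue2_def s_def e_def e'_def t_def)
  qed
  then show ?thesis by blast
qed

definition h0 :: "'a \<Rightarrow> 'a \<Rightarrow> 'a" where "h0 x0 = (SOME h. hprop x0 h)"

lemma h0_prop: assumes "x0 \<in> M"
  shows "h0 x0 \<in> autS" "\<And>z. z \<le> pS x0 \<Longrightarrow> h0 x0 z = z"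
    "\<And>z. pE x0 \<le> z \<Longrightarrow> z \<le> pE' x0 \<Longrightarrow> h0 x0 z = g z" "\<And>z. pT x0 \<le> z \<Longrightarrow> h0 x0 z = z"
proof -
  have "hprop x0 (h0 x0)" unfolding h0_def using h_ex[OF assms] by (rule someI_ex)
  then show "h0 x0 \<in> autS" "\<And>z. z \<le> pS x0 \<Longrightarrow> h0 x0 z = z"
    "\<And>z. pE x0 \<le> z \<Longrightarrow> z \<le> pE' x0 \<Longrightarrow> h0 x0 z = g z" "\<And>z. pT x0 \<le> z \<Longrightarrow> h0 x0 z = z"
    unfolding hprop_def by blast+
qed

end



lemma int_floor_ex:
  fixes q :: "int \<Rightarrow> 'b::linorder"
  assumes "q k1 \<le> x" "x < q k2" "k1 < k2"
  shows "\<exists>j. q j \<le> x \<and> x < q (j + 1)"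
proof -
  have "\<forall>k1. q k1 \<le> x \<longrightarrow> x < q (k1 + int d) \<longrightarrow> (\<exists>j. q j \<le> x \<and> x < q (j + 1))" for d
  proof (induct d)
    case 0 then show ?case by auto
  next
    case (Suc d)
    show ?case
    proof (intro allI impI)
      fix k assume k: "q k \<le> x" "x < q (k + int (Suc d))"
      show "\<exists>j. q j \<le> x \<and> x < q (j + 1)"
      proof (cases "x < q (k + 1)")
        case True then show ?thesis using k by blast
      next
        case False
        then have "q (k + 1) \<le> x" by simp
        moreover have "x < q ((k + 1) + int d)" using k(2) by (simp add: add.assoc)
        ultimately show ?thesis using Suc by blast
      qed
    qed
  qed
  moreover have "k2 = k1 + int (nat (k2 - k1))"
  proof -
    show ?thesis using assms(3) by simp
  qed
  ultimately show ?thesis using assms by metis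
qed

context upc
begin

lemma P_2: "P 2 x = g (g x)"
  using P_succ'[of 1 x] by simp

lemma P_shift: "P (-(2*j)) (P (2*j+2) x) = P 2 x"
  using P_add[of "-(2*j)" "2*j+2" x] by simp

lemma rel_between: "P m x0 \<le> y \<Longrightarrow> y \<le> P n x0 \<Longrightarrow> rel x0 y"
  unfolding rel_def by blast

definition II :: "('a \<times> int) set" where "II = R \<times> UNIV"
definition CC :: "'a \<times> int \<Rightarrow> 'a set" where
  "CC i = {P (2 * snd i) (fst i) <..< P (2 * snd i + 2) (fst i)}"
definition FF :: "'a \<times> int \<Rightarrow> 'a \<Rightarrow> 'a" where
  "FF i = P (2 * snd i) \<circ> h0 (fst i) \<circ> P (-(2 * snd i))"
definition H :: "'a \<Rightarrow> 'a" where "H = glue II CC FF"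

lemma CC_rel: "y \<in> CC i \<Longrightarrow> rel (fst i) y"
  unfolding CC_def by (auto intro: rel_between less_imp_le)

lemma CC_M: "i \<in> II \<Longrightarrow> y \<in> CC i \<Longrightarrow> y \<in> M"
  using CC_rel rel_M R_M unfolding II_def by (metis mem_Sigma_iff prod.collapse)

lemma same_class_disj:
  fixes lo hi :: "'a \<times> int \<Rightarrow> 'a"
  assumes rl: "\<And>i y. i \<in> II \<Longrightarrow> lo i < y \<Longrightarrow> y < hi i \<Longrightarrow> rel (fst i) y"
    and sep: "\<And>x0 j j'. x0 \<in> R \<Longrightarrow> j < j' \<Longrightarrow> hi (x0, j) \<le> lo (x0, j')"
    and i: "i \<in> II" "i' \<in> II" "i \<noteq> i'"
  shows "{lo i <..< hi i} \<inter> {lo i' <..< hi i'} = {}"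
proof (rule ccontr)
  assume "{lo i <..< hi i} \<inter> {lo i' <..< hi i'} \<noteq> {}"
  then obtain y where y: "lo i < y" "y < hi i" "lo i' < y" "y < hi i'" by auto
  obtain x0 j where i0: "i = (x0, j)" by (cases i)
  obtain x1 j' where i1: "i' = (x1, j')" by (cases i')
  have R0: "x0 \<in> R" "x1 \<in> R" using i i0 i1 by (auto simp: II_def)
  have r0: "rel x0 y" using rl[OF i(1) y(1,2)] i0 by simp
  have r1: "rel x1 y" using rl[OF i(2) y(3,4)] i1 by simp
  have "x0 = x1" using rel_R_eq[OF R0 r0 r1] .
  then have "j \<noteq> j'" using i i0 i1 by simp
  then show False
  proof (cases "j < j'")
    case True
    then show ?thesis using sep[OF R0(1) True] y i0 i1 \<open>x0 = x1\<close> by auto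
  next
    case False
    then have jj: "j' < j" using \<open>j \<noteq> j'\<close> by simp
    show ?thesis using sep[OF R0(1) jj] y i0 i1 \<open>x0 = x1\<close> by auto
  qed
qed

lemma CC_disj: "i \<in> II \<Longrightarrow> i' \<in> II \<Longrightarrow> i \<noteq> i' \<Longrightarrow> CC i \<inter> CC i' = {}"
  unfolding CC_def
proof (rule same_class_disj)
  fix i y assume "i \<in> II" "P (2 * snd i) (fst i) < y" "y < P (2 * snd i + 2) (fst i)"
  then show "rel (fst i) y" by (auto intro: rel_between less_imp_le)
next
  fix x0 :: 'a and j j' :: int assume "x0 \<in> R" "j < j'"
  then show "P (2 * snd (x0, j) + 2) (fst (x0, j)) \<le> P (2 * snd (x0, j')) (fst (x0, j'))"
    by (simp add: P_le)
qed

lemma FF_props: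
  assumes "i \<in> II"
  shows "FF i \<in> autS" "FF i (P (2 * snd i) (fst i)) = P (2 * snd i) (fst i)"
    "FF i (P (2 * snd i + 2) (fst i)) = P (2 * snd i + 2) (fst i)"
proof -
  obtain x0 j where i: "i = (x0, j)" by (cases i)
  have x0: "x0 \<in> M" using assms i R_M by (auto simp: II_def)
  note pp = pts_prop[OF x0] and hp = h0_prop[OF x0]
  show "FF i \<in> autS" unfolding FF_def by (rule autS_comp[OF autS_comp[OF P_aut] P_aut]) (simp add: i hp(1))
  show "FF i (P (2 * snd i) (fst i)) = P (2 * snd i) (fst i)"
    unfolding FF_def i using hp(2)[of x0] pp(1) by simp
  have "pT x0 \<le> P 2 x0" using pp(7) P_2 by simp
  then show "FF i (P (2 * snd i + 2) (fst i)) = P (2 * snd i + 2) (fst i)"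
    unfolding FF_def i using hp(4)[of "P 2 x0"] P_shift[of j x0] P_add[of "2*j" 2 x0] by simp
qed

lemma H_aut: "H \<in> autS"
  unfolding H_def
proof (rule glue_aut[OF CC_disj])
  fix i assume i: "i \<in> II"
  show "ocvx (CC i)" by (simp add: CC_def ocvx_interval)
  show "FF i ` CC i = CC i" "strict_mono_on (CC i) (FF i)"
    unfolding CC_def using aut_fix_interval[OF FF_props[OF i]] by simp_all
qed

lemma H_in: "i \<in> II \<Longrightarrow> y \<in> CC i \<Longrightarrow> H y = FF i y"
  unfolding H_def by (rule glue_in[where I=II and C=CC, OF CC_disj])

lemma H_out: "y \<notin> M \<Longrightarrow> H y = y"
  unfolding H_def by (rule glue_out) (use CC_M in blast)

lemma H_PA: "H \<in> PA"
  using H_aut H_out aM by blast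

lemma H_N: "H \<in> N"
proof (rule lemmaK[OF H_PA, where I=II and m="\<lambda>i. P (2 * snd i) (fst i)"
      and c="\<lambda>i. P (2 * snd i) (pS (fst i))" and d="\<lambda>i. P (2 * snd i) (pT (fst i))"
      and m'="\<lambda>i. P (2 * snd i + 2) (fst i)"])
  fix i assume i: "i \<in> II"
  obtain x0 j where i0: "i = (x0, j)" by (cases i)
  have x0: "x0 \<in> M" using i i0 R_M by (auto simp: II_def)
  note pp = pts_prop[OF x0]
  have sT: "pS x0 < pT x0" using pp g_ge[of "pE' x0"] by (meson less_le_trans less_trans)
  have "pT x0 < P 2 x0" using pp(7) P_2 by simp
  then have "P (2*j) (pT x0) < P (2*j+2) x0" using P_add[of "2*j" 2 x0] P_aut[of "2*j"] by simp
  then show "P (2 * snd i) (fst i) < P (2 * snd i) (pS (fst i)) \<and>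
        P (2 * snd i) (pS (fst i)) < P (2 * snd i) (pT (fst i)) \<and>
        P (2 * snd i) (pT (fst i)) < P (2 * snd i + 2) (fst i)"
    using i0 pp(1) sT P_aut[of "2*j"] by simp
  show "{P (2 * snd i) (fst i)<..<P (2 * snd i + 2) (fst i)} \<inter> a = {}"
    using CC_M[OF i] aM unfolding CC_def by blast
next
  fix i i' assume "i \<in> II" "i' \<in> II" "i \<noteq> i'"
  then show "{P (2 * snd i) (fst i)<..<P (2 * snd i + 2) (fst i)} \<inter>
             {P (2 * snd i') (fst i')<..<P (2 * snd i' + 2) (fst i')} = {}"
    using CC_disj unfolding CC_def by blast
next
  fix x assume nx: "\<forall>i\<in>II. \<not> (P (2 * snd i) (pS (fst i)) < x \<and> x < P (2 * snd i) (pT (fst i)))"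
  show "H x = x"
  proof (cases "\<exists>i\<in>II. x \<in> CC i")
    case True
    then obtain i where i: "i \<in> II" "x \<in> CC i" by blast
    obtain x0 j where i0: "i = (x0, j)" by (cases i)
    have x0: "x0 \<in> M" using i i0 R_M by (auto simp: II_def)
    note hp = h0_prop[OF x0]
    define z where "z = P (-(2*j)) x"
    have xz: "x = P (2*j) z" unfolding z_def by simp
    have "\<not> (P (2*j) (pS x0) < P (2*j) z \<and> P (2*j) z < P (2*j) (pT x0))"
      using nx i i0 xz by auto
    then have "\<not> (pS x0 < z \<and> z < pT x0)" using P_aut[of "2*j"] by simp
    then have "h0 x0 z = z" using hp(2,4) by (meson not_le)
    then show ?thesis using H_in[OF i] i0 xz by (simp add: FF_def)
  next
    case False
    then show ?thesis unfolding H_def by (intro glue_out) blast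
  qed
qed

end



context upc
begin

lemma M_lt: "x \<in> M \<Longrightarrow> x < g x" by (simp add: M_def)

definition f2 :: "'a \<Rightarrow> 'a" where "f2 = g \<circ> iv H"

lemma f2_PA: "f2 \<in> PA"
proof -
  have "iv H \<in> autS" using H_aut by (rule autS_inv)
  moreover have "\<forall>x\<in>a. iv H x = x" using H_PA by (metis (mono_tags, lifting) H_aut autS_inv_f mem_Collect_eq)
  ultimately show ?thesis unfolding f2_def using gPA by (simp add: autS_comp)
qed

lemma f2_N: "f2 \<in> N"
proof (rule lemmaK[OF f2_PA, where I=II and m="\<lambda>i. P (2 * snd i + 1) (pU (fst i))"
      and c="\<lambda>i. P (2 * snd i + 1) (pE' (fst i))" and d="\<lambda>i. P (2 * snd i + 3) (pE (fst i))"
      and m'="\<lambda>i. P (2 * snd i + 3) (pU (fst i))"])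
  fix i assume i: "i \<in> II"
  obtain x0 j where i0: "i = (x0, j)" by (cases i)
  have x0: "x0 \<in> M" using i i0 R_M by (auto simp: II_def)
  note pp = pts_prop[OF x0]
  have "g x0 < g (pE x0)" using pp gA by simp
  also have "g (pE x0) \<le> P 2 (pE x0)" using P_2 g_ge by simp
  finally have "pE' x0 < P 2 (pE x0)" using pp(5) by simp
  then have 1: "P (2*j+1) (pE' x0) < P (2*j+3) (pE x0)"
    using P_add[of "2*j+1" 2 "pE x0"] P_aut[of "2*j+1"] by (simp add: add.commute add.left_commute)
  show "P (2 * snd i + 1) (pU (fst i)) < P (2 * snd i + 1) (pE' (fst i)) \<and>
        P (2 * snd i + 1) (pE' (fst i)) < P (2 * snd i + 3) (pE (fst i)) \<and>
        P (2 * snd i + 3) (pE (fst i)) < P (2 * snd i + 3) (pU (fst i))"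
    using i0 pp 1 P_aut by simp
  have sub: "y \<in> M" if "P (2 * snd i + 1) (pU (fst i)) < y" "y < P (2 * snd i + 3) (pU (fst i))" for y
  proof -
    have xu: "x0 \<le> pU x0" using pp(1-3) by simp
    have ug: "pU x0 \<le> P 1 x0" using pp(4,5) by simp
    have "P (2*j+1) x0 \<le> P (2*j+1) (pU x0)" using xu P_aut[of "2*j+1"] by simp
    moreover have "P (2*j+3) (pU x0) \<le> P (2*j+3) (P 1 x0)" using ug P_aut[of "2*j+3"] by simp
    ultimately have "rel x0 y" using that i0 P_add[of "2*j+3" 1 x0]
      by (intro rel_between[of "2*j+1" _ _ "2*j+3+1"]) auto
    then show ?thesis using rel_M x0 by blast
  qed
  show "{P (2 * snd i + 1) (pU (fst i))<..<P (2 * snd i + 3) (pU (fst i))} \<inter> a = {}"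
    using sub aM by auto
next
  fix i i' assume ii: "i \<in> II" "i' \<in> II" "i \<noteq> i'"
  show "{P (2 * snd i + 1) (pU (fst i))<..<P (2 * snd i + 3) (pU (fst i))} \<inter>
        {P (2 * snd i' + 1) (pU (fst i'))<..<P (2 * snd i' + 3) (pU (fst i'))} = {}"
  proof (rule same_class_disj[OF _ _ ii])
    fix i y assume i: "i \<in> II" "P (2 * snd i + 1) (pU (fst i)) < y" "y < P (2 * snd i + 3) (pU (fst i))"
    obtain x0 j where i0: "i = (x0, j)" by (cases i)
    have x0: "x0 \<in> M" using i i0 R_M by (auto simp: II_def)
    note pp = pts_prop[OF x0]
    have xu: "x0 \<le> pU x0" using pp(1-3) by simp
    have ug: "pU x0 \<le> P 1 x0" using pp(4,5) by simp
    have "P (2*j+1) x0 \<le> P (2*j+1) (pU x0)" using xu P_aut[of "2*j+1"] by simp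
    moreover have "P (2*j+3) (pU x0) \<le> P (2*j+3) (P 1 x0)" using ug P_aut[of "2*j+3"] by simp
    ultimately show "rel (fst i) y" using i i0 P_add[of "2*j+3" 1 x0]
      by (simp, intro rel_between[of "2*j+1" _ _ "2*j+3+1"]) auto
  next
    fix x0 :: 'a and j j' :: int assume x0: "x0 \<in> R" "j < j'"
    note pp = pts_prop[OF R_M[OF x0(1)]]
    have "P 0 x0 \<le> pU x0" "pU x0 \<le> P 1 x0" using pp by simp_all
    then have "rel x0 (pU x0)" by (rule rel_between)
    then have "pU x0 \<in> M" using rel_M[OF R_M[OF x0(1)]] by blast
    then show "P (2 * snd (x0, j) + 3) (pU (fst (x0, j))) \<le> P (2 * snd (x0, j') + 1) (pU (fst (x0, j')))"
      using x0 by (simp add: P_le)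
  qed
next
  fix x assume nx: "\<forall>i\<in>II. \<not> (P (2 * snd i + 1) (pE' (fst i)) < x \<and> x < P (2 * snd i + 3) (pE (fst i)))"
  show "f2 x = x"
  proof (cases "x \<in> M")
    case False
    then have gx: "g x = x" using g_ge[of x] by (simp add: M_def)
    have "H x = x" using H_out False by simp
    then have "iv H x = x" using H_aut by (metis autS_inv_f)
    then show ?thesis using gx by (simp add: f2_def)
  next
    case True
    define x0 where "x0 = rep x"
    have R0: "x0 \<in> R" unfolding x0_def R_def using True by blast
    have x0M: "x0 \<in> M" using R_M[OF R0] .
    note pp = pts_prop[OF x0M]
    define e where "e = pE x0"
    define e' where "e' = pE' x0"
    have "rel x0 e" unfolding e_def using pp by (intro rel_between[of 0 _ _ 1]) (auto intro: less_imp_le)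
    moreover have "rel x0 x" using rel_rep[of x] rel_sym x0_def by simp
    ultimately have "rel e x" using rel_sym rel_trans by blast
    then obtain m n where mn: "P m e \<le> x" "x \<le> P n e" unfolding rel_def by blast
    have eM: "e \<in> M" using rel_M[OF x0M \<open>rel x0 e\<close>] .
    define q where "q k = P (2*k+1) e" for k
    have "P (2 * (- \<bar>m\<bar> - 1) + 1) e \<le> P m e" by (rule P_le) simp
    then have "q (-\<bar>m\<bar> - 1) \<le> x" unfolding q_def using mn(1) by simp
    moreover have "P n e < P (2 * \<bar>n\<bar> + 1) e" by (rule P_lt[OF M_lt[OF eM]]) simp
    then have "x < q \<bar>n\<bar>" unfolding q_def using mn(2) by simp
    ultimately obtain j where j: "q j \<le> x" "x < q (j + 1)"
      using int_floor_ex[of q "-\<bar>m\<bar> - 1" x "\<bar>n\<bar>"] by force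
    have iI: "(x0, j) \<in> II" using R0 by (simp add: II_def)
    have "\<not> (P (2 * j + 1) e' < x \<and> x < P (2 * j + 3) e)" using nx iI by (auto simp: e_def e'_def)
    moreover have "x < P (2 * j + 3) e" using j(2) by (simp add: q_def algebra_simps)
    ultimately have xle: "x \<le> P (2*j+1) e'" by simp
    define w where "w = P (-(2*j+1)) x"
    have xw: "x = P (2*j+1) w" unfolding w_def using P_cancel(2)[of "2*j+1" x] by (simp only:)
    have w1: "e \<le> w" using j(1) xw P_aut[of "2*j+1"] by (simp add: q_def)
    have w2: "w \<le> e'" using xle xw P_aut[of "2*j+1"] by simp
    define z where "z = P (2*j) w"
    have zx: "g z = x" unfolding z_def using xw P_succ'[of "2*j" w] by simp
    have zC: "z \<in> CC (x0, j)"
    proof -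
      have "x0 < w" using pp w1 unfolding e_def by simp
      then have 1: "P (2*j) x0 < z" unfolding z_def using P_aut[of "2*j"] by simp
      have "w < g x0" using w2 pp(5) unfolding e'_def by simp
      also have "g x0 \<le> g (g x0)" by (rule g_ge)
      finally have "w < P 2 x0" using P_2 by simp
      then have 2: "z < P (2*j+2) x0" unfolding z_def using P_add[of "2*j" 2 x0] P_aut[of "2*j"] by simp
      show ?thesis using 1 2 by (simp add: CC_def)
    qed
    have "H z = FF (x0, j) z" by (rule H_in[OF iI zC])
    also have "\<dots> = P (2*j) (h0 x0 w)" by (simp add: FF_def z_def)
    also have "\<dots> = P (2*j) (g w)" using h0_prop(3)[OF x0M w1[unfolded e_def] w2[unfolded e'_def]] by simp
    also have "\<dots> = x" using xw P_succ[of "2*j" w] by simp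
    finally have "H z = x" .
    then have "iv H x = z" using H_aut by (metis autS_inv_f)
    then show ?thesis using zx by (simp add: f2_def)
  qed
qed

lemma g_N: "g \<in> N"
proof -
  have "f2 \<circ> H = g" unfolding f2_def using H_aut by (simp add: fun_eq_iff)
  then show ?thesis using N_comp[OF f2_N H_N] by simp
qed

end



context core
begin

lemma up_in_N: assumes "g \<in> PA" "\<And>x. x \<le> g x" shows "g \<in> N"
proof -
  have "upc a b N g"
    by (rule upc.intro[OF core_axioms]) (rule upc_axioms.intro[OF assms])
  then show ?thesis by (rule upc.g_N)
qed

lemma PA_in_N: "PA \<subseteq> N"
proof
  fix g assume g: "g \<in> PA"
  have gA: "g \<in> autS" using g by simp
  have upA: "gup g \<in> autS" by (rule gup_aut[OF gA])
  have dnA: "gdn g \<in> autS" by (rule gdn_aut[OF gA])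
  have up: "gup g \<in> PA" using upA g by (auto simp: gup_def)
  have dn: "gdn g \<in> PA" using dnA g by (auto simp: gdn_def)
  have "gup g \<in> N" by (rule up_in_N[OF up gup_ge])
  moreover have "gdn g \<in> N"
  proof -
    have idA: "iv (gdn g) \<in> autS" by (rule autS_inv[OF dnA])
    have "\<forall>x\<in>a. iv (gdn g) x = x" using dn by (metis (mono_tags, lifting) dnA autS_inv_f mem_Collect_eq)
    then have "iv (gdn g) \<in> PA" using idA by simp
    then have "iv (gdn g) \<in> N" by (rule up_in_N[OF _ gdn_inv_ge[OF dnA]])
    then have "iv (iv (gdn g)) \<in> N" by (rule N_inv)
    moreover have "iv (iv (gdn g)) = gdn g" using dnA by (simp add: autS_def inv_inv_eq)
    ultimately show ?thesis by simp
  qed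
  ultimately have "gup g \<circ> gdn g \<in> N" by (rule N_comp)
  then show "g \<in> N" using gup_gdn[OF gA] by simp
qed

lemma N_eq: "N = PA" using PA_in_N N_sub by blast

end

theorem mainTheorem15:
  assumes "ultrahomogeneous TYPE('a::linorder_topology)"
    and "\<exists>x y :: 'a. x \<noteq> y"
  shows "simple_dynamical_ideal (order_aut_group :: ('a \<Rightarrow> 'a) monoid) UNIV
           (\<lambda>f x. f x) {A :: 'a set. nowhere_dense A}"
proof -
  have dense: "\<And>x y::'a. x < y \<Longrightarrow> \<exists>z. x < z \<and> z < y" using uh_dense[OF assms] by blast
  have gt: "\<And>x::'a. \<exists>y. x < y" using uh_gt[OF assms] by blast
  have lt: "\<And>x::'a. \<exists>y. y < x" using uh_lt[OF assms] by blast
  have nd: "nowhere_dense A \<longleftrightarrow> ndc A" for A :: "'a set" by (rule nd_iff_ndc[OF dense gt lt])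
  have I_eq: "{A :: 'a set. nowhere_dense A} = {A. ndc A}" using nd by blast
  have di: "dynamical_ideal (order_aut_group :: ('a \<Rightarrow> 'a) monoid) UNIV (\<lambda>f x. f x) {A :: 'a set. nowhere_dense A}"
    unfolding dynamical_ideal_def set_ideal_def I_eq
  proof (intro conjI allI impI ballI)
    show "group_action (order_aut_group :: ('a \<Rightarrow> 'a) monoid) UNIV (\<lambda>f x. f x)" by (rule group_action_oag)
    show "{A :: 'a set. ndc A} \<subseteq> Pow UNIV" by simp
    show "{} \<in> {A :: 'a set. ndc A}" using ndc_empty[OF dense] by simp
  next
    fix A B :: "'a set" assume "A \<in> {A. ndc A} \<and> B \<subseteq> A"
    then show "B \<in> {A. ndc A}" using ndc_subset[OF dense] by blast
  next
    fix A B :: "'a set" assume "A \<in> {A. ndc A} \<and> B \<in> {A. ndc A}"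
    then show "A \<union> B \<in> {A. ndc A}" using ndc_Un[OF dense] by blast
  next
    fix f :: "'a \<Rightarrow> 'a" and A :: "'a set" assume "f \<in> carrier order_aut_group" "A \<in> {A. ndc A}"
    then show "(\<lambda>x. f x) ` A \<in> {A. ndc A}" using ndc_image[OF dense] by simp
  next
    fix x :: 'a
    show "{x} \<in> {A. ndc A}" using ndc_single[OF dense] by simp
  qed
  show ?thesis
    unfolding simple_dynamical_ideal_def
  proof (intro conjI di allI impI)
    fix a b :: "'a set" and N
    assume ab: "a \<in> {A. nowhere_dense A} \<and> b \<in> {A. nowhere_dense A} \<and> a \<subseteq> b"
    assume NN: "normal N ((order_aut_group :: ('a \<Rightarrow> 'a) monoid)\<lparr>carrier := pstab order_aut_group (\<lambda>f x. f x) a\<rparr>) \<and>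
      pstab order_aut_group (\<lambda>f x. f x) b \<subseteq> N"
    have "core a b N"
      apply (rule core.intro)
           apply (rule assms(1))
          apply (rule assms(2))
      using ab nd apply blast
      using ab apply blast
      using NN apply (simp add: pstab_eq)
      using NN apply (simp add: pstab_eq)
      done
    then show "N = pstab order_aut_group (\<lambda>f x. f x) a" using core.N_eq by (simp add: pstab_eq)
  qed
qed


end
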